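(* Let $H$ be a nonempty graph, let $s\ge 0$ and $t\ge 1$ be integers. Then $\hat r(tK_2,H\cup sK_1)=\hat r(tK_2,H)$. In particular, $\hat r_\infty(H\cup sK_1)=\hat r_\infty(H)$.
   Context: All graphs are finite and simple; a graph is nonempty if it has at least one edge. $G\cup H$ is the disjoint union, $tK_2$ is a matching with $t$ edges, $sK_1$ is the edgeless graph on $s$ vertices. For graphs $F,G,H$, $F\to(G,H)$ means every red--blue coloring of $E(F)$ contains a red copy of $G$ or a blue copy of $H$, and $\hat r(G,H)=\min\{|E(F)|:F\to(G,H)\}$. For a nonempty graph $G$, $\hat r_\infty(G)=\lim_{t\to\infty}\frac{\hat r(tK_2,G)}{t\,|E(G)|}$ (this limit exists). *)

theory Defs
  imports Complex_Main
begin

text \<open>A finite simple graph is represented as a pair (V, E) with V a finite set of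
natural numbers and E a set of 2-element subsets of V.  Any finite simple graph
is isomorphic to one of this form.\<close>

type_synonym graph = "nat set \<times> nat set set"

definition wf_graph :: "graph \<Rightarrow> bool" where
  "wf_graph G \<longleftrightarrow> finite (fst G) \<and>
     (\<forall>e\<in>snd G. \<exists>x y. x \<noteq> y \<and> e = {x, y} \<and> x \<in> fst G \<and> y \<in> fst G)"

definition has_copy :: "graph \<Rightarrow> nat set \<Rightarrow> nat set set \<Rightarrow> bool" where
  "has_copy G V S \<longleftrightarrow> (\<exists>f. inj_on f (fst G) \<and> f ` fst G \<subseteq> V \<and> (\<forall>e\<in>snd G. f ` e \<in> S))"

text \<open>F \<rightarrow> (G, H): every red/blue colouring of E(F) (red edges R) has a red copy of G
or a blue copy of H.\<close>
definition arrows :: "graph \<Rightarrow> graph \<Rightarrow> graph \<Rightarrow> bool" where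
  "arrows F G H \<longleftrightarrow> (\<forall>R \<subseteq> snd F. has_copy G (fst F) R \<or> has_copy H (fst F) (snd F - R))"

definition size_ramsey :: "graph \<Rightarrow> graph \<Rightarrow> nat" where
  "size_ramsey G H = (LEAST m. \<exists>F. wf_graph F \<and> arrows F G H \<and> card (snd F) = m)"

definition matching :: "nat \<Rightarrow> graph" where
  "matching t = ({0..<2*t}, (\<lambda>i. {2*i, 2*i+1}) ` {0..<t})"

definition empty_graph :: "nat \<Rightarrow> graph" where
  "empty_graph s = ({0..<s}, {})"

definition disj_union :: "graph \<Rightarrow> graph \<Rightarrow> graph" where
  "disj_union G H = ((\<lambda>v. 2*v) ` fst G \<union> (\<lambda>v. 2*v+1) ` fst H,
                     (image (\<lambda>v. 2*v)) ` snd G \<union> (image (\<lambda>v. 2*v+1)) ` snd H)"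

definition r_inf :: "graph \<Rightarrow> real" where
  "r_inf G = lim (\<lambda>t. real (size_ramsey (matching t) G) / (real t * real (card (snd G))))"

end

theory Submission
  imports Defs
begin

lemma has_copy_mono:
  assumes "has_copy G V S" "V \<subseteq> V'" "S \<subseteq> S'"
  shows "has_copy G V' S'"
proof -
  obtain f where f: "inj_on f (fst G)" "f ` fst G \<subseteq> V" "\<forall>e\<in>snd G. f ` e \<in> S"
    using assms(1) unfolding has_copy_def by (elim exE conjE) iprover
  have "f ` fst G \<subseteq> V'" using f(2) assms(2) by (rule subset_trans)
  moreover have "\<forall>e\<in>snd G. f ` e \<in> S'" using f(3) assms(3) by (simp add: subset_iff)
  ultimately show ?thesis unfolding has_copy_def using f(1) by iprover
qed

lemma fst_du: "fst (disj_union G K) = (\<lambda>v. 2*v) ` fst G \<union> (\<lambda>v. 2*v+1) ` fst K"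
  by (simp add: disj_union_def)

lemma snd_du: "snd (disj_union G K) = (image (\<lambda>v. 2*v)) ` snd G \<union> (image (\<lambda>v. 2*v+1)) ` snd K"
  by (simp add: disj_union_def)

lemma mem_even: "x \<in> fst G \<Longrightarrow> 2*x \<in> fst (disj_union G K)"
  unfolding fst_du by (intro UnI1 imageI)

lemma edge_even: "e \<in> snd G \<Longrightarrow> (\<lambda>v. 2*v) ` e \<in> snd (disj_union G K)"
  unfolding snd_du by (intro UnI1 imageI)

lemma copy_down:
  assumes "has_copy (disj_union H K) V S"
  shows "has_copy H V S"
proof -
  obtain f where f: "inj_on f (fst (disj_union H K))"
    "f ` fst (disj_union H K) \<subseteq> V"
    "\<forall>e\<in>snd (disj_union H K). f ` e \<in> S"
    using assms unfolding has_copy_def by (elim exE conjE) iprover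
  define g where "g = (\<lambda>v. f (2*v))"
  have "inj_on g (fst H)"
  proof (rule inj_onI)
    fix x y assume x: "x \<in> fst H" and y: "y \<in> fst H" and "g x = g y"
    then have "f (2*x) = f (2*y)" by (simp add: g_def)
    then have "2*x = 2*y"
      by (rule inj_onD[OF f(1) _ mem_even[OF x] mem_even[OF y]])
    then show "x = y" by simp
  qed
  moreover have "g ` fst H \<subseteq> V"
  proof
    fix z assume "z \<in> g ` fst H"
    then obtain x where x: "x \<in> fst H" "z = f (2*x)" unfolding g_def by (elim imageE)
    have "f (2*x) \<in> f ` fst (disj_union H K)" using mem_even[OF x(1)] by (rule imageI)
    then show "z \<in> V" using f(2) x(2) by (simp add: subset_iff)
  qed
  moreover have "\<forall>e\<in>snd H. g ` e \<in> S"
  proof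
    fix e assume "e \<in> snd H"
    then have "(\<lambda>v. 2*v) ` e \<in> snd (disj_union H K)" by (rule edge_even)
    then have "f ` ((\<lambda>v. 2*v) ` e) \<in> S" using f(3) by (rule bspec[rotated])
    then show "g ` e \<in> S" unfolding g_def by (simp add: image_image)
  qed
  ultimately show ?thesis unfolding has_copy_def by iprover
qed

lemma fst_empty: "fst (empty_graph s) = {0..<s}"
  by (simp add: empty_graph_def)

lemma snd_empty: "snd (empty_graph s) = {}"
  by (simp add: empty_graph_def)

lemma copy_up:
  assumes "has_copy H V S" "\<forall>v\<in>V. v < M"
  shows "has_copy (disj_union H (empty_graph s)) (V \<union> {M..<M+s}) S"
proof -
  obtain g where g: "inj_on g (fst H)" "g ` fst H \<subseteq> V" "\<forall>e\<in>snd H. g ` e \<in> S"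
    using assms(1) unfolding has_copy_def by (elim exE conjE) iprover
  have ga: "a \<in> fst H \<Longrightarrow> g a < M" for a
  proof -
    assume "a \<in> fst H"
    then have "g a \<in> V" using g(2) by (simp add: subset_iff)
    then show "g a < M" using assms(2) by simp
  qed
  define f where "f = (\<lambda>v::nat. if even v then g (v div 2) else M + v div 2)"
  have fe: "f (2*v) = g v" for v unfolding f_def by simp
  have fo: "f (2*v+1) = M + v" for v unfolding f_def by simp
  have cases: "P" if "x \<in> fst (disj_union H (empty_graph s))"
     "\<And>a. x = 2*a \<Longrightarrow> a \<in> fst H \<Longrightarrow> P"
     "\<And>a. x = 2*a+1 \<Longrightarrow> a < s \<Longrightarrow> P" for x P
  proof -
    have "x \<in> (\<lambda>v. 2*v) ` fst H \<or> x \<in> (\<lambda>v. 2*v+1) ` {0..<s}"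
      using that(1) unfolding fst_du fst_empty by (rule UnE) iprover+
    then show P
    proof
      assume "x \<in> (\<lambda>v. 2*v) ` fst H"
      then obtain a where "a \<in> fst H" "x = 2*a" by (elim imageE) iprover
      then show P using that(2) by iprover
    next
      assume "x \<in> (\<lambda>v. 2*v+1) ` {0..<s}"
      then obtain a where "a \<in> {0..<s}" "x = 2*a+1" by (elim imageE) iprover
      then show P using that(3) by simp
    qed
  qed
  have "inj_on f (fst (disj_union H (empty_graph s)))"
  proof (rule inj_onI)
    fix x y
    assume x: "x \<in> fst (disj_union H (empty_graph s))"
      and y: "y \<in> fst (disj_union H (empty_graph s))" and xy: "f x = f y"
    show "x = y"
    proof (rule cases[OF x])
      fix a assume xa: "x = 2*a" "a \<in> fst H"
      show "x = y"
      proof (rule cases[OF y])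
        fix b assume yb: "y = 2*b" "b \<in> fst H"
        have "g a = g b" using xy xa yb fe by simp
        then have "a = b" using g(1) xa(2) yb(2) by (simp add: inj_on_eq_iff)
        then show "x = y" using xa yb by simp
      next
        fix b assume yb: "y = 2*b+1" "b < s"
        have "g a = M + b" using xy xa yb fe fo by simp
        then show "x = y" using ga[OF xa(2)] by simp
      qed
    next
      fix a assume xa: "x = 2*a+1" "a < s"
      show "x = y"
      proof (rule cases[OF y])
        fix b assume yb: "y = 2*b" "b \<in> fst H"
        have "M + a = g b" using xy xa yb fe fo by simp
        then show "x = y" using ga[OF yb(2)] by simp
      next
        fix b assume yb: "y = 2*b+1" "b < s"
        have "M + a = M + b" using xy xa yb fo by simp
        then show "x = y" using xa yb by simp
      qed
    qed
  qed
  moreover have "f ` fst (disj_union H (empty_graph s)) \<subseteq> V \<union> {M..<M+s}"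
  proof
    fix z assume "z \<in> f ` fst (disj_union H (empty_graph s))"
    then obtain x where x: "x \<in> fst (disj_union H (empty_graph s))" "z = f x"
      by (elim imageE) iprover
    show "z \<in> V \<union> {M..<M+s}"
    proof (rule cases[OF x(1)])
      fix a assume "x = 2*a" "a \<in> fst H"
      then have "z \<in> V" using x(2) fe g(2) by (simp add: subset_iff)
      then show ?thesis by (rule UnI1)
    next
      fix a assume "x = 2*a+1" "a < s"
      then have "z \<in> {M..<M+s}" using x(2) fo by simp
      then show ?thesis by (rule UnI2)
    qed
  qed
  moreover have "\<forall>e\<in>snd (disj_union H (empty_graph s)). f ` e \<in> S"
  proof
    fix e assume "e \<in> snd (disj_union H (empty_graph s))"
    then have "e \<in> (image (\<lambda>v. 2*v)) ` snd H" unfolding snd_du snd_empty by simp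
    then obtain e0 where e0: "e0 \<in> snd H" "e = (\<lambda>v. 2*v) ` e0"
      by (elim imageE) iprover
    have "f ` e = g ` e0" unfolding e0(2) image_image fe by simp
    then show "f ` e \<in> S" using g(3) e0(1) by simp
  qed
  ultimately show ?thesis unfolding has_copy_def by iprover
qed

lemma pred_eq:
  "(\<exists>F. wf_graph F \<and> arrows F G (disj_union H (empty_graph s)) \<and> card (snd F) = m)
   \<longleftrightarrow> (\<exists>F. wf_graph F \<and> arrows F G H \<and> card (snd F) = m)"
proof
  assume "\<exists>F. wf_graph F \<and> arrows F G (disj_union H (empty_graph s)) \<and> card (snd F) = m"
  then obtain F where "wf_graph F" "arrows F G (disj_union H (empty_graph s))" "card (snd F) = m"
    by blast
  moreover have "arrows F G H"
    unfolding arrows_def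
  proof (intro allI impI)
    fix R assume "R \<subseteq> snd F"
    then have "has_copy G (fst F) R \<or> has_copy (disj_union H (empty_graph s)) (fst F) (snd F - R)"
      using \<open>arrows F G _\<close> unfolding arrows_def by (elim allE impE)
    then show "has_copy G (fst F) R \<or> has_copy H (fst F) (snd F - R)"
      using copy_down by (elim disjE) iprover+
  qed
  ultimately show "\<exists>F. wf_graph F \<and> arrows F G H \<and> card (snd F) = m" by blast
next
  assume "\<exists>F. wf_graph F \<and> arrows F G H \<and> card (snd F) = m"
  then obtain F where F: "wf_graph F" "arrows F G H" "card (snd F) = m" by blast
  have fin: "finite (fst F)" using F(1) unfolding wf_graph_def by blast
  define M where "M = Suc (Max (insert 0 (fst F)))"
  have M: "\<forall>v\<in>fst F. v < M"
  proof
    fix v assume "v \<in> fst F"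
    then have "v \<le> Max (insert 0 (fst F))" using fin by (intro Max_ge) auto
    then show "v < M" unfolding M_def by simp
  qed
  define F' where "F' = (fst F \<union> {M..<M+s}, snd F)"
  have "wf_graph F'" unfolding wf_graph_def
  proof
    show "finite (fst F')" using fin unfolding F'_def by simp
    show "\<forall>e\<in>snd F'. \<exists>x y. x \<noteq> y \<and> e = {x, y} \<and> x \<in> fst F' \<and> y \<in> fst F'"
    proof
      fix e assume "e \<in> snd F'"
      then have "e \<in> snd F" unfolding F'_def by simp
      then obtain x y where "x \<noteq> y" "e = {x, y}" "x \<in> fst F" "y \<in> fst F"
        using F(1) unfolding wf_graph_def by blast
      moreover have "fst F \<subseteq> fst F'" unfolding F'_def by simp
      ultimately show "\<exists>x y. x \<noteq> y \<and> e = {x, y} \<and> x \<in> fst F' \<and> y \<in> fst F'" by blast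
    qed
  qed
  moreover have "card (snd F') = m" using F(3) unfolding F'_def by simp
  moreover have "arrows F' G (disj_union H (empty_graph s))"
    unfolding arrows_def
  proof (intro allI impI)
    fix R assume "R \<subseteq> snd F'"
    then have "R \<subseteq> snd F" unfolding F'_def by simp
    then have "has_copy G (fst F) R \<or> has_copy H (fst F) (snd F - R)"
      using F(2) unfolding arrows_def by (elim allE impE)
    then show "has_copy G (fst F') R \<or>
          has_copy (disj_union H (empty_graph s)) (fst F') (snd F' - R)"
    proof
      assume "has_copy G (fst F) R"
      moreover have "fst F \<subseteq> fst F'" unfolding F'_def by simp
      ultimately show ?thesis using has_copy_mono[of G "fst F" R "fst F'" R] by blast
    next
      assume "has_copy H (fst F) (snd F - R)"
      from copy_up[OF this M, of s] show ?thesis unfolding F'_def by simp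
    qed
  qed
  ultimately show "\<exists>F. wf_graph F \<and> arrows F G (disj_union H (empty_graph s)) \<and> card (snd F) = m"
    by blast
qed

lemma sr_eq: "size_ramsey G (disj_union H (empty_graph s)) = size_ramsey G H"
  unfolding size_ramsey_def pred_eq ..

lemma card_eq: "card (snd (disj_union H (empty_graph s))) = card (snd H)"
proof -
  have "snd (disj_union H (empty_graph s)) = (image (\<lambda>v::nat. 2*v)) ` snd H"
    unfolding disj_union_def empty_graph_def by simp
  moreover have "inj (image (\<lambda>v::nat. 2*v))"
  proof (rule injI)
    fix A B :: "nat set" assume "(\<lambda>v. 2*v) ` A = (\<lambda>v. 2*v) ` B"
    moreover have "inj (\<lambda>v::nat. 2*v)" by (simp add: inj_on_def)
    ultimately show "A = B" by (simp add: inj_image_eq_iff)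
  qed
  ultimately show ?thesis by (simp add: card_image inj_on_subset)
qed

theorem lemma2p5:
  fixes H :: graph and s t :: nat
  assumes "wf_graph H" and "snd H \<noteq> {}" and "t \<ge> 1"
  shows "size_ramsey (matching t) (disj_union H (empty_graph s)) = size_ramsey (matching t) H
         \<and> r_inf (disj_union H (empty_graph s)) = r_inf H"
  unfolding r_inf_def sr_eq card_eq by simp

end
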